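(* Let $n\ge 11$ and let $G$ be a connected bidegreed graph of order $n$ with maximum degree $n-1$, and let $k=|M(G)|$. Then $$cM_2(G)\le k(n-k)\left((n-1)^2-k^2\right),$$ with equality if and only if $G$ is isomorphic to $K_k+\overline{K}_{n-k}$. Also, the inequality $$cM_2(G)\le \epsilon\, n^2(1-\epsilon)\left((n-1)^2-\epsilon^2n^2\right)$$ holds for some real $\epsilon$ lying between $372/1000$ and $392/1000$.
   Context: All graphs are finite and simple. For a graph $G$ and a vertex $u$, $d_u(G)$ denotes the degree of $u$ in $G$. The complementary second Zagreb index of $G$ is $cM_2(G)=\sum_{uv\in E(G)}\left|(d_u(G))^2-(d_v(G))^2\right|$. $M(G)$ denotes the set of vertices of $G$ having the maximum degree of $G$. A graph is bidegreed if the set of distinct vertex degrees has exactly two elements. $K_m$ is the complete graph on $m$ vertices, $\overline{H}$ is the complement of $H$, and $H_1+H_2$ (the join) is the graph on the disjoint union $V(H_1)\cup V(H_2)$ with edge set $E(H_1)\cup E(H_2)\cup\{h_1h_2: h_1\in V(H_1),h_2\in V(H_2)\}$. *)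

theory Defs
  imports Complex_Main
begin

text \<open>A graph is a pair (vertex set, edge set); edges are 2-element vertex sets.\<close>
type_synonym 'a graph = "'a set \<times> 'a set set"

definition verts :: "'a graph \<Rightarrow> 'a set" where "verts G = fst G"
definition edges :: "'a graph \<Rightarrow> 'a set set" where "edges G = snd G"

definition simple_graph :: "'a graph \<Rightarrow> bool" where
  "simple_graph G \<longleftrightarrow> finite (verts G) \<and>
     (\<forall>e\<in>edges G. \<exists>u v. u \<noteq> v \<and> u \<in> verts G \<and> v \<in> verts G \<and> e = {u, v})"

definition deg :: "'a graph \<Rightarrow> 'a \<Rightarrow> nat" where
  "deg G u = card {e \<in> edges G. u \<in> e}"

definition connected_graph :: "'a graph \<Rightarrow> bool" where
  "connected_graph G \<longleftrightarrow> (\<forall>u\<in>verts G. \<forall>v\<in>verts G. \<exists>p. p \<noteq> [] \<and> hd p = u \<and> last p = v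
      \<and> set p \<subseteq> verts G \<and> (\<forall>i. Suc i < length p \<longrightarrow> {p ! i, p ! Suc i} \<in> edges G))"

definition bidegreed :: "'a graph \<Rightarrow> bool" where
  "bidegreed G \<longleftrightarrow> card (deg G ` verts G) = 2"

definition max_degree :: "'a graph \<Rightarrow> nat" where
  "max_degree G = Max (deg G ` verts G)"

definition max_deg_verts :: "'a graph \<Rightarrow> 'a set" where
  "max_deg_verts G = {v \<in> verts G. deg G v = max_degree G}"

text \<open>Complementary second Zagreb index: for an edge e = {u,v}, the term
  |d_u^2 - d_v^2| equals max minus min of the squared degrees over e.\<close>
definition cM2 :: "'a graph \<Rightarrow> int" where
  "cM2 G = (\<Sum>e\<in>edges G. Max ((\<lambda>x. int (deg G x) ^ 2) ` e) - Min ((\<lambda>x. int (deg G x) ^ 2) ` e))"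

definition complete_graph :: "nat \<Rightarrow> nat graph" where
  "complete_graph m = ({0..<m}, {{i, j} | i j. i < m \<and> j < m \<and> i \<noteq> j})"

definition complement :: "'a graph \<Rightarrow> 'a graph" where
  "complement H = (verts H, {{u, v} | u v. u \<in> verts H \<and> v \<in> verts H \<and> u \<noteq> v} - edges H)"

definition join :: "'a graph \<Rightarrow> 'b graph \<Rightarrow> ('a + 'b) graph" where
  "join H1 H2 = (Inl ` verts H1 \<union> Inr ` verts H2,
     (image Inl) ` edges H1 \<union> (image Inr) ` edges H2 \<union>
     {{Inl a, Inr b} | a b. a \<in> verts H1 \<and> b \<in> verts H2})"

definition graph_iso :: "'a graph \<Rightarrow> 'b graph \<Rightarrow> bool" where
  "graph_iso G H \<longleftrightarrow> (\<exists>f. bij_betw f (verts G) (verts H) \<and>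
     (\<forall>u\<in>verts G. \<forall>v\<in>verts G. {u, v} \<in> edges G \<longleftrightarrow> {f u, f v} \<in> edges H))"

end

theory Submission imports Defs begin

definition nbr :: "'a graph \<Rightarrow> 'a \<Rightarrow> 'a set" where
  "nbr G u = {v \<in> verts G. {u, v} \<in> edges G}"

lemma sg_edge: "simple_graph G \<Longrightarrow> e \<in> edges G \<Longrightarrow> \<exists>u v. u \<noteq> v \<and> u \<in> verts G \<and> v \<in> verts G \<and> e = {u, v}"
  unfolding simple_graph_def by blast

lemma sg_finite_edges: assumes "simple_graph G" shows "finite (edges G)"
proof -
  have "edges G \<subseteq> Pow (verts G)" using sg_edge[OF assms] by blast
  moreover have "finite (verts G)" using assms simple_graph_def by blast
  ultimately show ?thesis by (meson finite_Pow_iff finite_subset)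
qed

lemma sg_no_loop: "simple_graph G \<Longrightarrow> {u} \<notin> edges G"
  using sg_edge by (metis doubleton_eq_iff insert_absorb2)

lemma sg_edge_verts: "simple_graph G \<Longrightarrow> {u, v} \<in> edges G \<Longrightarrow> u \<in> verts G \<and> v \<in> verts G"
  using sg_edge by (metis doubleton_eq_iff)

lemma deg_nbr:
  assumes "simple_graph G" "u \<in> verts G"
  shows "deg G u = card (nbr G u)"
proof -
  have "bij_betw (\<lambda>v. {u, v}) (nbr G u) {e \<in> edges G. u \<in> e}"
  proof (rule bij_betwI')
    show "\<And>x y. x \<in> nbr G u \<Longrightarrow> y \<in> nbr G u \<Longrightarrow> ({u, x} = {u, y}) = (x = y)"
      by (metis doubleton_eq_iff)
    show "\<And>x. x \<in> nbr G u \<Longrightarrow> {u, x} \<in> {e \<in> edges G. u \<in> e}"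
      by (auto simp: nbr_def)
    show "\<exists>x\<in>nbr G u. y = {u, x}" if "y \<in> {e \<in> edges G. u \<in> e}" for y
    proof -
      from that obtain a b where ab: "a \<noteq> b" "a \<in> verts G" "b \<in> verts G" "y = {a, b}" "y \<in> edges G" "u \<in> y"
        using sg_edge[OF assms(1)] by blast
      show ?thesis
      proof (cases "u = a")
        case True then show ?thesis using ab by (auto simp: nbr_def)
      next
        case False then have "u = b" using ab by auto
        then show ?thesis using ab by (intro bexI[of _ a]) (auto simp: nbr_def insert_commute)
      qed
    qed
  qed
  then show ?thesis unfolding deg_def by (simp add: bij_betw_same_card)
qed

lemma nbr_sub: assumes "simple_graph G" "u \<in> verts G" shows "nbr G u \<subseteq> verts G - {u}"
  using sg_no_loop[OF assms(1)] by (auto simp: nbr_def)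

lemma deg_le: assumes "simple_graph G" "u \<in> verts G" shows "deg G u \<le> card (verts G) - 1"
proof -
  have "finite (verts G)" using assms simple_graph_def by blast
  then have "card (nbr G u) \<le> card (verts G - {u})" using nbr_sub[OF assms] by (intro card_mono) auto
  then show ?thesis using deg_nbr[OF assms] assms by simp
qed

lemma deg_full: assumes "simple_graph G" "u \<in> verts G" "deg G u = card (verts G) - 1"
  shows "nbr G u = verts G - {u}"
proof -
  have f: "finite (verts G)" using assms simple_graph_def by blast
  have "card (nbr G u) = card (verts G - {u})" using deg_nbr[OF assms(1,2)] assms f by simp
  then show ?thesis using nbr_sub[OF assms(1,2)] f by (intro card_subset_eq) auto
qed

lemma full_deg: assumes "simple_graph G" "u \<in> verts G" "nbr G u = verts G - {u}"
  shows "deg G u = card (verts G) - 1"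
  using deg_nbr[OF assms(1,2)] assms(3) assms(2) simple_graph_def assms(1) by auto

lemma join_verts: "verts (join (complete_graph k) (complement (complete_graph m))) = Inl ` {0..<k} \<union> Inr ` {0..<m}"
  by (simp add: join_def verts_def complement_def complete_graph_def)

lemma join_edges: "edges (join (complete_graph k) (complement (complete_graph m))) =
   (image Inl) ` {{i, j} | i j. i < k \<and> j < k \<and> i \<noteq> j} \<union> {{Inl a, Inr b} | a b. a < k \<and> b < m}"
  by (auto simp: join_def verts_def edges_def complement_def complete_graph_def)


lemma main_graph:
  fixes G :: "'a graph" and n k :: nat
  assumes sg: "simple_graph G" and bd: "bidegreed G"
    and cn: "card (verts G) = n" and n11: "n \<ge> 11"
    and md: "max_degree G = n - 1"
    and kM: "k = card (max_deg_verts G)"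
  shows "\<exists>d. k \<le> d \<and> d < n - 1 \<and> 1 \<le> k \<and> k < n \<and>
     cM2 G = int k * int (n - k) * (int (n-1) ^ 2 - int d ^ 2) \<and>
     (d = k \<longleftrightarrow> graph_iso G (join (complete_graph k) (complement (complete_graph (n - k)))))"
proof -
  let ?V = "verts G" and ?E = "edges G"
  have fin: "finite ?V" using sg simple_graph_def by blast
  have Vne: "?V \<noteq> {}" using cn n11 by auto
  have maxin: "n - 1 \<in> deg G ` ?V"
    using md Max_in[of "deg G ` ?V"] fin Vne unfolding max_degree_def by auto
  have degle: "\<And>v. v \<in> ?V \<Longrightarrow> deg G v \<le> n - 1" using deg_le[OF sg] cn by auto
  define M where "M = max_deg_verts G"
  have Mdef: "M = {v \<in> ?V. deg G v = n - 1}" unfolding M_def max_deg_verts_def md ..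
  obtain x y where xy: "deg G ` ?V = {x, y}" "x \<noteq> y"
    using bd unfolding bidegreed_def by (meson card_2_iff)
  obtain d where D: "deg G ` ?V = {n - 1, d}" "d \<noteq> n - 1"
    using xy maxin by (metis insert_commute insertE singletonD)
  have dV: "d \<in> deg G ` ?V" using D by auto
  then have dlt: "d < n - 1" using degle D by fastforce
  define Ot where "Ot = ?V - M"
  have Odeg: "\<And>u. u \<in> Ot \<Longrightarrow> deg G u = d" using D unfolding Ot_def Mdef by auto
  have Mdeg: "\<And>u. u \<in> M \<Longrightarrow> deg G u = n - 1" unfolding Mdef by auto
  have MV: "M \<subseteq> ?V" unfolding Mdef by auto
  have OV: "Ot \<subseteq> ?V" unfolding Ot_def by auto
  have MO: "M \<inter> Ot = {}" unfolding Ot_def by auto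
  have MuO: "?V = M \<union> Ot" unfolding Ot_def using MV by auto
  have One: "Ot \<noteq> {}" using dV D Mdef Ot_def by auto
  have Mne: "M \<noteq> {}" using maxin Mdef by auto
  have finM: "finite M" and finO: "finite Ot" using fin MV OV finite_subset by auto
  have Mfull: "\<And>m w. m \<in> M \<Longrightarrow> w \<in> ?V \<Longrightarrow> w \<noteq> m \<Longrightarrow> {m, w} \<in> ?E"
  proof -
    fix m w assume a: "m \<in> M" "w \<in> ?V" "w \<noteq> m"
    have "nbr G m = ?V - {m}" using deg_full[OF sg] a MV Mdeg cn by auto
    then show "{m, w} \<in> ?E" using a unfolding nbr_def by auto
  qed
  have OsupM: "\<And>u. u \<in> Ot \<Longrightarrow> M \<subseteq> nbr G u"
  proof
    fix u m assume a: "u \<in> Ot" "m \<in> M"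
    then have "{m, u} \<in> ?E" using Mfull OV MO by blast
    then show "m \<in> nbr G u" using a MV unfolding nbr_def by (auto simp: insert_commute)
  qed
  have kcard: "k = card M" using kM M_def by simp
  have finnbr: "\<And>u. finite (nbr G u)" using fin unfolding nbr_def by auto
  obtain u0 where u0: "u0 \<in> Ot" using One by auto
  have kd: "k \<le> d"
    using card_mono[OF finnbr OsupM[OF u0]] deg_nbr[OF sg, of u0] Odeg[OF u0] u0 OV kcard by auto
  have cardO: "card Ot = n - k" unfolding Ot_def using MV fin cn kcard finite_subset card_Diff_subset by metis
  have k1: "1 \<le> k" using Mne finM kcard by (simp add: Suc_le_eq card_gt_0_iff)
  have kn: "k < n" using cardO One finO by (metis card_0_eq diff_is_0_eq' not_le)
  define Cr where "Cr = (\<lambda>(m, w). {m, w}) ` (M \<times> Ot)"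
  define C :: int where "C = int (n-1) ^ 2 - int d ^ 2"
  have CrE: "Cr \<subseteq> ?E" unfolding Cr_def using Mfull OV MO by fastforce
  have cardCr: "card Cr = k * (n - k)"
  proof -
    have "inj_on (\<lambda>(m, w). {m, w}) (M \<times> Ot)"
      unfolding inj_on_def using MO by (auto simp: doubleton_eq_iff)
    then show ?thesis unfolding Cr_def using kcard cardO by (simp add: card_image card_cartesian_product)
  qed
  have tval: "Max ((\<lambda>x. int (deg G x) ^ 2) ` e) - Min ((\<lambda>x. int (deg G x) ^ 2) ` e)
      = (if e \<in> Cr then C else 0)" if e: "e \<in> ?E" for e
  proof -
    obtain u v where uv: "u \<noteq> v" "u \<in> ?V" "v \<in> ?V" "e = {u, v}" using sg_edge[OF sg e] by blast
    have lt: "int d ^ 2 < int (n - 1) ^ 2" using dlt by (simp add: power_strict_mono)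
    have mm: "\<And>A B::int. B < A \<Longrightarrow> Max {A, B} - Min {A, B} = A - B" by auto
    consider "u \<in> M" "v \<in> M" | "u \<in> Ot" "v \<in> Ot" | "u \<in> M" "v \<in> Ot" | "u \<in> Ot" "v \<in> M"
      using uv MuO by blast
    then show ?thesis
    proof cases
      case 1
      have "e \<notin> Cr" unfolding Cr_def using 1 uv MO by (auto simp: doubleton_eq_iff)
      then show ?thesis using 1 uv Mdeg by simp
    next
      case 2
      have "e \<notin> Cr" unfolding Cr_def using 2 uv MO by (auto simp: doubleton_eq_iff)
      then show ?thesis using 2 uv Odeg by simp
    next
      case 3
      have "e \<in> Cr" unfolding Cr_def using 3 uv by auto
      moreover have "(\<lambda>x. int (deg G x) ^ 2) ` e = {int (n-1) ^ 2, int d ^ 2}" using 3 uv Mdeg Odeg by auto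
      ultimately show ?thesis using mm[OF lt] C_def by simp
    next
      case 4
      have "e \<in> Cr" unfolding Cr_def using 4 uv by (auto simp: insert_commute)
      moreover have "(\<lambda>x. int (deg G x) ^ 2) ` e = {int (n-1) ^ 2, int d ^ 2}" using 4 uv Mdeg Odeg by auto
      ultimately show ?thesis using mm[OF lt] C_def by simp
    qed
  qed
  have cM: "cM2 G = int k * int (n - k) * C"
  proof -
    have "cM2 G = (\<Sum>e\<in>?E. if e \<in> Cr then C else 0)"
      unfolding cM2_def using tval by (intro sum.cong) auto
    also have "\<dots> = (\<Sum>e\<in>?E \<inter> Cr. C)"
      using sg_finite_edges[OF sg] by (simp only: sum.inter_restrict[symmetric])
    also have "?E \<inter> Cr = Cr" using CrE by auto
    finally show ?thesis using cardCr by simp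
  qed
  define H where "H = join (complete_graph k) (complement (complete_graph (n - k)))"
  have iso_iff: "d = k \<longleftrightarrow> graph_iso G H"
  proof
    assume dk: "d = k"
    have Onbr: "nbr G u = M" if u: "u \<in> Ot" for u
    proof -
      have "card M = card (nbr G u)" using deg_nbr[OF sg, of u] u OV Odeg dk kcard by auto
      then show ?thesis using card_subset_eq[OF finnbr OsupM[OF u]] by simp
    qed
    obtain gM where gM: "bij_betw gM M {0..<k}"
      using finite_same_card_bij[OF finM finite_atLeastLessThan[of 0 k]] kcard by force
    obtain gO where gO: "bij_betw gO Ot {0..<n-k}"
      using finite_same_card_bij[OF finO finite_atLeastLessThan[of 0 "n-k"]] cardO by force
    define f where "f v = (if v \<in> M then Inl (gM v) else Inr (gO v))" for v
    have b1: "bij_betw f M (Inl ` {0..<k})"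
    proof -
      have "bij_betw (Inl \<circ> gM) M (Inl ` {0..<k})"
        by (rule bij_betw_trans[OF gM]) (simp add: bij_betw_imageI)
      then show ?thesis by (rule bij_betw_cong[THEN iffD1, rotated]) (auto simp: f_def)
    qed
    have b2: "bij_betw f Ot (Inr ` {0..<n-k})"
    proof -
      have "bij_betw (Inr \<circ> gO) Ot (Inr ` {0..<n-k})"
        by (rule bij_betw_trans[OF gO]) (simp add: bij_betw_imageI)
      then show ?thesis by (rule bij_betw_cong[THEN iffD1, rotated]) (use MO in \<open>auto simp: f_def\<close>)
    qed
    have bij: "bij_betw f ?V (verts H)"
      unfolding H_def join_verts MuO by (rule bij_betw_combine[OF b1 b2]) auto
    have gMr: "\<And>v. v \<in> M \<Longrightarrow> gM v < k" using gM by (auto simp: bij_betw_def)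
    have gOr: "\<And>v. v \<in> Ot \<Longrightarrow> gO v < n - k" using gO by (auto simp: bij_betw_def)
    have gMi: "\<And>u v. u \<in> M \<Longrightarrow> v \<in> M \<Longrightarrow> gM u = gM v \<Longrightarrow> u = v"
      using gM by (auto simp: bij_betw_def inj_on_def)
    have "{u, v} \<in> ?E \<longleftrightarrow> {f u, f v} \<in> edges H" if uv: "u \<in> ?V" "v \<in> ?V" for u v
    proof (cases "u = v")
      case True
      then show ?thesis using sg_no_loop[OF sg] unfolding H_def join_edges
        by (auto simp: doubleton_eq_iff) (metis sum.inject(1), metis sum.distinct(1))
    next
      case False
      consider "u \<in> M" "v \<in> M" | "u \<in> Ot" "v \<in> Ot" | "u \<in> M" "v \<in> Ot" | "u \<in> Ot" "v \<in> M"
        using uv MuO by blast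
      then show ?thesis
      proof cases
        case 1
        have "{f u, f v} = Inl ` {gM u, gM v}" using 1 f_def by simp
        moreover have "gM u \<noteq> gM v" using gMi 1 False by blast
        ultimately have "{f u, f v} \<in> edges H" unfolding H_def join_edges using 1 gMr by blast
        then show ?thesis using Mfull 1 uv False by auto
      next
        case 2
        have "{u, v} \<notin> ?E" using Onbr[OF 2(1)] 2 MO uv unfolding nbr_def by auto
        moreover have "{f u, f v} \<notin> edges H" using 2 MO unfolding H_def join_edges f_def
          by (auto simp: doubleton_eq_iff)
        ultimately show ?thesis by simp
      next
        case 3
        have "v \<notin> M" using 3 MO by auto
        then have "{f u, f v} = {Inl (gM u), Inr (gO v)}" using 3 f_def by simp
        moreover have "{Inl (gM u), Inr (gO v)} \<in> {{Inl a, Inr b} | a b. a < k \<and> b < n - k}"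
          using 3 gMr gOr by blast
        ultimately have "{f u, f v} \<in> edges H" unfolding H_def join_edges by simp
        then show ?thesis using Mfull 3 uv False by auto
      next
        case 4
        have "u \<notin> M" using 4 MO by auto
        then have "{f u, f v} = {Inl (gM v), Inr (gO u)}" using 4 f_def by (simp add: insert_commute)
        moreover have "{Inl (gM v), Inr (gO u)} \<in> {{Inl a, Inr b} | a b. a < k \<and> b < n - k}"
          using 4 gMr gOr by blast
        ultimately have "{f u, f v} \<in> edges H" unfolding H_def join_edges by simp
        then show ?thesis using Mfull[of v u] 4 uv False by (auto simp: insert_commute)
      qed
    qed
    then show "graph_iso G H" unfolding graph_iso_def using bij by blast
  next
    assume "graph_iso G H"
    then obtain f where bij: "bij_betw f ?V (verts H)"
      and fe: "\<And>u v. u \<in> ?V \<Longrightarrow> v \<in> ?V \<Longrightarrow> {u, v} \<in> ?E \<longleftrightarrow> {f u, f v} \<in> edges H"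
      unfolding graph_iso_def by blast
    show "d = k"
    proof (rule ccontr)
      assume "d \<noteq> k"
      then have dk: "k < d" using kd by simp
      have "card M < card (nbr G u0)" using deg_nbr[OF sg, of u0] u0 OV Odeg kcard dk by auto
      then have "\<not> nbr G u0 \<subseteq> M" using card_mono[OF finM, of "nbr G u0"] by linarith
      then obtain v where v: "v \<in> nbr G u0" "v \<notin> M" by blast
      have vV: "v \<in> ?V" and vu: "v \<noteq> u0" using v nbr_sub[OF sg, of u0] u0 OV by auto
      have vO: "v \<in> Ot" using v vV Ot_def by auto
      have "{f u0, f v} \<in> edges H" using fe[of u0 v] v vV u0 OV unfolding nbr_def by auto
      then have "\<exists>w\<in>{u0, v}. \<exists>a<k. f w = Inl a"
        unfolding H_def join_edges by (auto simp: doubleton_eq_iff)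
      then obtain w a where w: "w \<in> Ot" "a < k" "f w = Inl a" using u0 vO by blast
      have wV: "w \<in> ?V" using w OV by auto
      have "nbr G w = ?V - {w}"
      proof (rule equalityI)
        show "nbr G w \<subseteq> ?V - {w}" using nbr_sub[OF sg wV] .
        show "?V - {w} \<subseteq> nbr G w"
        proof
          fix z assume z: "z \<in> ?V - {w}"
          have fz: "f z \<in> verts H" using bij z by (auto simp: bij_betw_def)
          have fzw: "f z \<noteq> f w" using bij z wV by (auto simp: bij_betw_def inj_on_def)
          have "{f w, f z} \<in> edges H"
          proof -
            from fz consider j where "j < k" "f z = Inl j" | j where "j < n - k" "f z = Inr j"
              unfolding H_def join_verts by auto
            then show ?thesis
            proof cases
              case 1
              then have "a \<noteq> j" using fzw w by auto
              have "{f w, f z} = Inl ` {a, j}" using 1 w by simp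
              moreover have "{a, j} \<in> {{i, j} | i j. i < k \<and> j < k \<and> i \<noteq> j}"
                using 1 w \<open>a \<noteq> j\<close> by blast
              ultimately show ?thesis unfolding H_def join_edges by blast
            next
              case 2
              have "{f w, f z} \<in> {{Inl a, Inr b} | a b. a < k \<and> b < n - k}"
                using 2 w by auto
              then show ?thesis unfolding H_def join_edges by blast
            qed
          qed
          then show "z \<in> nbr G w" using fe[of w z] z wV unfolding nbr_def by auto
        qed
      qed
      then have "deg G w = n - 1" using full_deg[OF sg wV] cn by simp
      then show False using w Odeg dlt by auto
    qed
  qed
  show ?thesis using kd dlt k1 kn cM C_def iso_iff H_def by blast
qed

definition Fp :: "real \<Rightarrow> real \<Rightarrow> real" where
  "Fp n x = x * (n - x) * ((n - 1)^2 - x^2)"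

lemma Fp_deriv: "((Fp n) has_real_derivative
   ((n-1)^2 * (n - 2*x) - x^2 * (3*n - 4*x))) (at x)"
proof -
  have e: "Fp n = (\<lambda>x. n*(n-1)^2*x - (n-1)^2*x^2 - n*x^3 + x^4)"
    by (rule ext) (simp add: Fp_def power2_eq_square power3_eq_cube power4_eq_xxxx algebra_simps)
  show ?thesis unfolding e
    by (rule derivative_eq_intros refl)+ (simp add: power2_eq_square power3_eq_cube algebra_simps)
qed

lemma Fp_cont: "continuous_on S (Fp n)"
  unfolding Fp_def by (intro continuous_intros)

lemma h_mono:
  fixes x y n :: real
  assumes "0 \<le> x" "x \<le> y" "2*y \<le> n"
  shows "x^2 * (3*n - 4*x) \<le> y^2 * (3*n - 4*y)"
proof -
  have eq: "y^2 * (3*n - 4*y) - x^2 * (3*n - 4*x) = (y-x) * (2*x*(n-2*x) + 2*y*(n-2*y) + x*(n-2*y) + y*(n-2*x))"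
    by (simp add: power2_eq_square algebra_simps)
  have "0 \<le> 2*x*(n-2*x) + 2*y*(n-2*y) + x*(n-2*y) + y*(n-2*x)"
    using assms by (intro add_nonneg_nonneg mult_nonneg_nonneg) auto
  then have "0 \<le> (y-x) * (2*x*(n-2*x) + 2*y*(n-2*y) + x*(n-2*y) + y*(n-2*x))"
    using assms by simp
  then show ?thesis using eq by linarith
qed

lemma D_nonneg:
  fixes x n :: real
  assumes "n \<ge> 11" "0 \<le> x" "x \<le> 372/1000 * n"
  shows "0 \<le> (n-1)^2 * (n - 2*x) - x^2 * (3*n - 4*x)"
proof -
  let ?y = "372/1000 * n"
  have 1: "x^2 * (3*n - 4*x) \<le> ?y^2 * (3*n - 4*?y)"
    using assms by (intro h_mono) auto
  have 2: "(n-1)^2 * (n - 2*?y) \<le> (n-1)^2 * (n - 2*x)"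
    using assms by (intro mult_left_mono) auto
  have 3: "(n-1)^2 \<ge> (10/11 * n)^2"
    using assms by (intro power_mono) auto
  have 4: "(n-1)^2 * (n - 2*?y) \<ge> (10/11 * n)^2 * (n - 2*?y)"
    using assms 3 by (intro mult_right_mono) auto
  have 5: "(10/11 * n)^2 * (n - 2*?y) - ?y^2 * (3*n - 4*?y) = n^3 * (256/1000 * 100/121 - (372/1000)^2*(3 - 4*372/1000))"
    by (simp add: power2_eq_square power3_eq_cube algebra_simps)
  have 6: "n^3 * (256/1000 * 100/121 - (372/1000)^2*(3 - 4*372/1000)) \<ge> 0"
    using assms by (intro mult_nonneg_nonneg) (simp_all add: power2_eq_square)
  show ?thesis using 1 2 4 5 6 by linarith
qed

lemma D_nonpos:
  fixes x n :: real
  assumes "n \<ge> 11" "392/1000 * n \<le> x" "x \<le> n - 1"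
  shows "(n-1)^2 * (n - 2*x) - x^2 * (3*n - 4*x) \<le> 0"
proof (cases "2*x \<le> n")
  case True
  have 1: "(n-1)^2 * (n - 2*x) \<le> n^2 * (n - 2*x)"
    using assms True by (intro mult_right_mono power_mono) auto
  have q: "4*x^2 + n*x - n^2 \<ge> 4*(392/1000*n)^2 + n*(392/1000*n) - n^2"
    using assms by (intro add_mono mult_left_mono power_mono diff_mono) auto
  have q2: "4*(392/1000*n)^2 + n*(392/1000*n) - n^2 = n^2 * (4*(392/1000)^2 + 392/1000 - 1)"
    by (simp add: power2_eq_square algebra_simps)
  have q3: "n^2 * (4*(392/1000)^2 + 392/1000 - 1) \<ge> 0" by (intro mult_nonneg_nonneg) (simp_all add: power2_eq_square)
  have 2: "n^2 * (n - 2*x) - x^2 * (3*n - 4*x) = (x - n) * (4*x^2 + n*x - n^2)"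
    by (simp add: power2_eq_square algebra_simps)
  have "(x - n) * (4*x^2 + n*x - n^2) \<le> 0"
    using assms q q2 q3 by (intro mult_nonpos_nonneg) auto
  then show ?thesis using 1 2 by linarith
next
  case False
  have 1: "x^2 * (2*x - n) \<le> (n-1)^2 * (2*x - n)"
    using assms False by (intro mult_right_mono power_mono) auto
  have 2: "x^2 * (4*x - 3*n) \<le> x^2 * (2*x - n)"
    using assms by (intro mult_left_mono) auto
  have "(n-1)^2 * (n - 2*x) - x^2 * (3*n - 4*x) = x^2 * (4*x - 3*n) - (n-1)^2 * (2*x - n)"
    by (simp add: algebra_simps)
  then show ?thesis using 1 2 by linarith
qed

lemma eps_bound:
  fixes x n :: real
  assumes "n \<ge> 11" "0 \<le> x" "x \<le> n - 1"
  shows "\<exists>\<epsilon>::real. 372/1000 \<le> \<epsilon> \<and> \<epsilon> \<le> 392/1000 \<and>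
     x * (n - x) * ((n - 1)^2 - x^2) \<le> \<epsilon> * n ^ 2 * (1 - \<epsilon>) * ((n - 1) ^ 2 - \<epsilon> ^ 2 * n ^ 2)"
proof -
  have g: "\<epsilon> * n ^ 2 * (1 - \<epsilon>) * ((n - 1) ^ 2 - \<epsilon> ^ 2 * n ^ 2) = Fp n (\<epsilon> * n)" for \<epsilon>
    by (simp add: Fp_def power2_eq_square algebra_simps)
  have fx: "x * (n - x) * ((n - 1)^2 - x^2) = Fp n x" by (simp add: Fp_def)
  consider "x < 372/1000 * n" | "392/1000 * n < x" | "372/1000 * n \<le> x \<and> x \<le> 392/1000 * n" by linarith
  then show ?thesis
  proof cases
    case 1
    have "Fp n x \<le> Fp n (372/1000 * n)"
      by (rule DERIV_nonneg_imp_increasing_open[OF less_imp_le[OF 1] _ Fp_cont])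
         (use assms Fp_deriv D_nonneg in force)
    then show ?thesis using g[of "372/1000"] fx by (intro exI[of _ "372/1000"]) simp
  next
    case 2
    have "Fp n x \<le> Fp n (392/1000 * n)"
      by (rule DERIV_nonpos_imp_decreasing_open[OF less_imp_le[OF 2] _ Fp_cont])
         (use assms Fp_deriv D_nonpos in force)
    then show ?thesis using g[of "392/1000"] fx by (intro exI[of _ "392/1000"]) simp
  next
    case 3
    have "x = (x/n) * n" using assms by auto
    then have "Fp n x = Fp n ((x/n) * n)" by simp
    moreover have "372/1000 \<le> x/n" "x/n \<le> 392/1000" using 3 assms by (auto simp: field_simps)
    ultimately show ?thesis using g[of "x/n"] fx by (intro exI[of _ "x/n"]) simp
  qed
qed

theorem proposition4:
  fixes G :: "'a graph" and n k :: nat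
  assumes "simple_graph G" and "connected_graph G" and "bidegreed G"
    and "card (verts G) = n" and "n \<ge> 11"
    and "max_degree G = n - 1"
    and "k = card (max_deg_verts G)"
  shows "cM2 G \<le> int k * (int n - int k) * ((int n - 1) ^ 2 - int k ^ 2)
    \<and> (cM2 G = int k * (int n - int k) * ((int n - 1) ^ 2 - int k ^ 2)
         \<longleftrightarrow> graph_iso G (join (complete_graph k) (complement (complete_graph (n - k)))))
    \<and> (\<exists>\<epsilon>::real. 372/1000 \<le> \<epsilon> \<and> \<epsilon> \<le> 392/1000 \<and>
         real_of_int (cM2 G) \<le> \<epsilon> * real n ^ 2 * (1 - \<epsilon>) * ((real n - 1) ^ 2 - \<epsilon> ^ 2 * real n ^ 2))"
proof -
  obtain d where kd: "k \<le> d" and dlt: "d < n - 1" and k1: "1 \<le> k" and kn: "k < n"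
    and cM0: "cM2 G = int k * int (n - k) * (int (n-1) ^ 2 - int d ^ 2)"
    and iso: "d = k \<longleftrightarrow> graph_iso G (join (complete_graph k) (complement (complete_graph (n - k))))"
    using main_graph[OF assms(1,3,4,5,6,7)] by blast
  have cM: "cM2 G = int k * (int n - int k) * ((int n - 1) ^ 2 - int d ^ 2)"
    using cM0 kn by (simp add: of_nat_diff)
  have pos: "0 < int k * (int n - int k)" using k1 kn by simp
  have dk2: "int k ^ 2 \<le> int d ^ 2" using kd by (simp add: power_mono)
  have P1: "cM2 G \<le> int k * (int n - int k) * ((int n - 1) ^ 2 - int k ^ 2)"
    unfolding cM using pos dk2 by (intro mult_left_mono) auto
  have P2: "cM2 G = int k * (int n - int k) * ((int n - 1) ^ 2 - int k ^ 2) \<longleftrightarrow> d = k"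
  proof
    assume "cM2 G = int k * (int n - int k) * ((int n - 1) ^ 2 - int k ^ 2)"
    then show "d = k" unfolding cM using k1 kn by simp
  qed (simp add: cM)
  have R: "real_of_int (cM2 G) \<le> real k * (real n - real k) * ((real n - 1) ^ 2 - real k ^ 2)"
  proof -
    have "real_of_int (cM2 G) \<le> real_of_int (int k * (int n - int k) * ((int n - 1) ^ 2 - int k ^ 2))"
      using P1 by linarith
    then show ?thesis by simp
  qed
  obtain \<epsilon> :: real where e: "372/1000 \<le> \<epsilon>" "\<epsilon> \<le> 392/1000"
    "real k * (real n - real k) * ((real n - 1)^2 - real k^2) \<le> \<epsilon> * real n ^ 2 * (1 - \<epsilon>) * ((real n - 1) ^ 2 - \<epsilon> ^ 2 * real n ^ 2)"
    using eps_bound[of "real n" "real k"] assms(5) kn by fastforce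
  show ?thesis using P1 P2 iso R e by (meson order_trans)
qed

end
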